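(* Fix $\rho>0$. There exists a constant $C=C(\rho)$ such that for every positive integer $K$ and every interval $I\subset\mathbb{Z}$ of $K$ consecutive sites, with $\mathcal{M}_I=\sigma\big(\sum_{x\in I}\eta(x)\big)$, $$E_{\nu_\rho}\Big[\Big(E_{\nu_\rho}\Big(\sum_{x\in I}V_g(\eta(x))\,\Big|\,\mathcal{M}_I\Big)\Big)^2\Big]\le C.$$
   Context: $g(k)=1_{\{k\ge1\}}$ for $k\in\mathbb{N}=\{0,1,2,\dots\}$. $\nu_\rho$ is the product measure on $\mathbb{N}^{\mathbb{Z}}$ with geometric marginals $\nu_\rho(\eta(x)=k)=\frac{1}{1+\rho}\big(\frac{\rho}{1+\rho}\big)^k$, $k\ge0$ (mean $\rho$). $\phi(\rho)=E_{\nu_\rho}[g(\eta(0))]=\frac{\rho}{1+\rho}$ and $V_g(\eta(x))=g(\eta(x))-\phi(\rho)-\phi'(\rho)[\eta(x)-\rho]$. *)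

theory Defs
  imports "HOL-Probability.Probability"
begin

text \<open>Single-site marginal: geometric with mean rho,
  nu(eta(x)=k) = 1/(1+rho) * (rho/(1+rho))^k.\<close>
definition marg :: "real \<Rightarrow> nat pmf" where
  "marg \<rho> = geometric_pmf (1 / (1 + \<rho>))"

definition nu :: "real \<Rightarrow> (int \<Rightarrow> nat) measure" where
  "nu \<rho> = PiM UNIV (\<lambda>_::int. measure_pmf (marg \<rho>))"

definition g :: "nat \<Rightarrow> real" where
  "g k = (if k \<ge> 1 then 1 else 0)"

definition phi :: "real \<Rightarrow> real" where
  "phi \<rho> = \<rho> / (1 + \<rho>)"

definition Vg :: "real \<Rightarrow> nat \<Rightarrow> real" where
  "Vg \<rho> k = g k - phi \<rho> - deriv phi \<rho> * (real k - \<rho>)"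

definition MI :: "real \<Rightarrow> int set \<Rightarrow> (int \<Rightarrow> nat) measure" where
  "MI \<rho> I = vimage_algebra (space (nu \<rho>)) (\<lambda>\<eta>. \<Sum>x\<in>I. \<eta> x) (count_space UNIV)"

end

theory Submission
  imports Defs
begin



abbreviation NB :: "real \<Rightarrow> nat \<Rightarrow> nat measure" where
  "NB \<rho> K \<equiv> measure_pmf (neg_binomial_pmf K (1/(1+\<rho>)))"

lemma marg_pmf: "\<rho> > 0 \<Longrightarrow> pmf (marg \<rho>) k = (\<rho>/(1+\<rho>))^k * (1/(1+\<rho>))"
  unfolding marg_def by (subst pmf_geometric) (auto simp: field_simps)

lemma nu_prob: "prob_space (nu \<rho>)"
  unfolding nu_def by (intro prob_space_PiM measure_pmf.prob_space_axioms)

lemma nu_restrict: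
  assumes "finite J"
  shows "distr (nu \<rho>) (PiM J (\<lambda>_. measure_pmf (marg \<rho>))) (\<lambda>\<eta>. restrict \<eta> J) = PiM J (\<lambda>_. measure_pmf (marg \<rho>))"
proof -
  interpret product_prob_space "\<lambda>_::int. measure_pmf (marg \<rho>)" "UNIV::int set"
    by (intro product_prob_spaceI measure_pmf.prob_space_axioms)
  show ?thesis unfolding nu_def using assms by (intro distr_PiM_restrict_finite) auto
qed

lemma meas_H2:
  assumes "f1 \<in> M \<rightarrow>\<^sub>M count_space (UNIV::nat set)" "f2 \<in> M \<rightarrow>\<^sub>M count_space (UNIV::nat set)"
  shows "(\<lambda>\<omega>. H (f1 \<omega>) (f2 \<omega>)) \<in> borel_measurable M"
proof -
  have "(\<lambda>\<omega>. (f1 \<omega>, f2 \<omega>)) \<in> M \<rightarrow>\<^sub>M count_space UNIV \<Otimes>\<^sub>M count_space UNIV"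
    using assms by measurable
  also have "count_space (UNIV::nat set) \<Otimes>\<^sub>M count_space (UNIV::nat set) = count_space UNIV"
    by (simp add: pair_measure_countable)
  finally have *: "(\<lambda>\<omega>. (f1 \<omega>, f2 \<omega>)) \<in> M \<rightarrow>\<^sub>M count_space UNIV" .
  have "(\<lambda>z. H (fst z) (snd z)) \<in> count_space UNIV \<rightarrow>\<^sub>M borel"
    by auto
  from measurable_compose[OF * this] show ?thesis by simp
qed

lemma sum_upd_out: "x \<notin> J \<Longrightarrow> (\<Sum>y\<in>J. if y = x then k else \<omega> y) = (\<Sum>y\<in>J. \<omega> y)"
  by (intro sum.cong) auto

lemma joint_law:
  fixes H2 :: "nat \<Rightarrow> nat \<Rightarrow> ennreal"
  assumes fin: "finite J" and x: "x \<notin> J"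
    and IH: "\<And>H::nat \<Rightarrow> ennreal. (\<integral>\<^sup>+\<eta>. H (\<Sum>y\<in>J. \<eta> y) \<partial>nu \<rho>) = (\<integral>\<^sup>+n. H n \<partial>NB \<rho> (card J))"
  shows "(\<integral>\<^sup>+\<eta>. H2 (\<eta> x) (\<Sum>y\<in>J. \<eta> y) \<partial>nu \<rho>) = (\<integral>\<^sup>+m. \<integral>\<^sup>+k. H2 k m \<partial>marg \<rho> \<partial>NB \<rho> (card J))"
proof -
  let ?M = "\<lambda>_::int. measure_pmf (marg \<rho>)"
  interpret product_prob_space ?M "UNIV::int set"
    by (intro product_prob_spaceI measure_pmf.prob_space_axioms)
  define h where "h = (\<lambda>\<omega>::int\<Rightarrow>nat. H2 (\<omega> x) (\<Sum>y\<in>J. \<omega> y))"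
  define H' where "H' = (\<lambda>m. \<integral>\<^sup>+k. H2 k m \<partial>marg \<rho>)"
  have hm: "h \<in> borel_measurable (PiM (insert x J) ?M)"
    unfolding h_def by (rule meas_H2) measurable
  have rm: "(\<lambda>\<eta>. restrict \<eta> (insert x J)) \<in> nu \<rho> \<rightarrow>\<^sub>M PiM (insert x J) ?M"
    unfolding nu_def by (rule measurable_restrict_subset) auto
  have rm2: "(\<lambda>\<eta>. restrict \<eta> J) \<in> nu \<rho> \<rightarrow>\<^sub>M PiM J ?M"
    unfolding nu_def by (rule measurable_restrict_subset) auto
  have hm2: "(\<lambda>\<omega>. H' (\<Sum>y\<in>J. \<omega> y)) \<in> borel_measurable (PiM J ?M)"
    using meas_H2[of "\<lambda>\<omega>. \<Sum>y\<in>J. \<omega> y" "PiM J ?M" "\<lambda>\<omega>. \<Sum>y\<in>J. \<omega> y" "\<lambda>a b. H' a"] by measurable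
  have "(\<integral>\<^sup>+\<eta>. H2 (\<eta> x) (\<Sum>y\<in>J. \<eta> y) \<partial>nu \<rho>) = (\<integral>\<^sup>+\<eta>. h (restrict \<eta> (insert x J)) \<partial>nu \<rho>)"
    unfolding h_def by (intro nn_integral_cong) simp
  also have "\<dots> = (\<integral>\<^sup>+\<omega>. h \<omega> \<partial>distr (nu \<rho>) (PiM (insert x J) ?M) (\<lambda>\<eta>. restrict \<eta> (insert x J)))"
    by (rule nn_integral_distr[symmetric, OF rm]) (simp add: hm)
  also have "\<dots> = (\<integral>\<^sup>+\<omega>. h \<omega> \<partial>PiM (insert x J) ?M)"
    using fin by (simp add: nu_restrict)
  also have "\<dots> = (\<integral>\<^sup>+\<omega>. \<integral>\<^sup>+y. h (fun_upd \<omega> x y) \<partial>marg \<rho> \<partial>PiM J ?M)"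
    using fin x hm by (rule product_nn_integral_insert)
  also have "\<dots> = (\<integral>\<^sup>+\<omega>. H' (\<Sum>y\<in>J. \<omega> y) \<partial>PiM J ?M)"
    unfolding h_def H'_def using x
    using x by (intro nn_integral_cong) (simp add: sum_upd_out)
  also have "\<dots> = (\<integral>\<^sup>+\<omega>. H' (\<Sum>y\<in>J. \<omega> y) \<partial>distr (nu \<rho>) (PiM J ?M) (\<lambda>\<eta>. restrict \<eta> J))"
    using fin by (simp add: nu_restrict)
  also have "\<dots> = (\<integral>\<^sup>+\<eta>. H' (\<Sum>y\<in>J. restrict \<eta> J y) \<partial>nu \<rho>)"
    by (rule nn_integral_distr[OF rm2]) (simp add: hm2)
  also have "\<dots> = (\<integral>\<^sup>+\<eta>. H' (\<Sum>y\<in>J. \<eta> y) \<partial>nu \<rho>)"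
    by (intro nn_integral_cong) simp
  also have "\<dots> = (\<integral>\<^sup>+m. H' m \<partial>NB \<rho> (card J))" by (rule IH)
  finally show ?thesis unfolding H'_def .
qed

lemma law_sum:
  assumes fin: "finite J"
  shows "(\<integral>\<^sup>+\<eta>. H (\<Sum>y\<in>J. \<eta> y) \<partial>nu \<rho>) = (\<integral>\<^sup>+n. H n \<partial>NB \<rho> (card J))"
  using fin
proof (induction J arbitrary: H rule: finite_induct)
  case empty
  interpret prob_space "nu \<rho>" by (rule nu_prob)
  show ?case by (simp add: emeasure_space_1)
next
  case (insert x J)
  have "(\<integral>\<^sup>+\<eta>. H (\<Sum>y\<in>insert x J. \<eta> y) \<partial>nu \<rho>) = (\<integral>\<^sup>+\<eta>. H (\<eta> x + (\<Sum>y\<in>J. \<eta> y)) \<partial>nu \<rho>)"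
    using insert by simp
  also have "\<dots> = (\<integral>\<^sup>+m. \<integral>\<^sup>+k. H (k + m) \<partial>marg \<rho> \<partial>NB \<rho> (card J))"
    using joint_law[OF insert(1,2) insert(3), of "\<lambda>k m. H (k + m)"] by simp
  also have "\<dots> = (\<integral>\<^sup>+z. H (fst z + snd z) \<partial>pair_pmf (neg_binomial_pmf (card J) (1/(1+\<rho>))) (marg \<rho>))"
    by (simp add: nn_integral_pair_pmf' add.commute)
  also have "\<dots> = (\<integral>\<^sup>+z. H (fst z + snd z) \<partial>pair_pmf (marg \<rho>) (neg_binomial_pmf (card J) (1/(1+\<rho>))))"
    by (subst (2) pair_commute_pmf) (simp add: case_prod_unfold add.commute)
  also have "\<dots> = (\<integral>\<^sup>+n. H n \<partial>NB \<rho> (card (insert x J)))"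
    using insert by (simp add: neg_binomial_pmf_Suc marg_def case_prod_unfold)
  finally show ?case .
qed



lemma regroup_count:
  fixes w :: "nat \<times> nat \<Rightarrow> ennreal"
  shows "(\<integral>\<^sup>+z. w z \<partial>count_space UNIV) = (\<integral>\<^sup>+n. (\<Sum>k\<le>n. w (k, n-k)) \<partial>count_space UNIV)"
proof -
  define W where "W = (\<lambda>(z::nat\<times>nat, n::nat). w z * indicator {fst z + snd z} n)"
  have "(\<integral>\<^sup>+z. w z \<partial>count_space UNIV) = (\<integral>\<^sup>+z. \<integral>\<^sup>+n. W (z, n) \<partial>count_space UNIV \<partial>count_space UNIV)"
    unfolding W_def by (intro nn_integral_cong) simp
  also have "\<dots> = (\<integral>\<^sup>+n. \<integral>\<^sup>+z. W (z, n) \<partial>count_space UNIV \<partial>count_space UNIV)"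
    by (simp add: nn_integral_fst_count_space nn_integral_snd_count_space)
  also have "\<dots> = (\<integral>\<^sup>+n. (\<Sum>k\<le>n. w (k, n-k)) \<partial>count_space UNIV)"
  proof (intro nn_integral_cong)
    fix n :: nat
    define D where "D = (\<lambda>k. (k, n - k)) ` {..n}"
    have D: "D = {z. fst z + snd z = n}"
      unfolding D_def by (auto simp: image_iff)
    have "(\<integral>\<^sup>+z. W (z, n) \<partial>count_space UNIV) = (\<integral>\<^sup>+z. w z * indicator D z \<partial>count_space UNIV)"
      unfolding W_def D by (intro nn_integral_cong) (auto simp: indicator_def)
    also have "\<dots> = (\<integral>\<^sup>+z. w z \<partial>count_space D)"
      by (simp add: nn_integral_count_space_indicator)
    also have "\<dots> = (\<Sum>z\<in>D. w z)"
      unfolding D_def by (intro nn_integral_count_space_finite) simp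
    also have "\<dots> = (\<Sum>k\<le>n. w (k, n-k))"
      unfolding D_def by (subst sum.reindex) (auto simp: inj_on_def)
    finally show "(\<integral>\<^sup>+z. W (z, n) \<partial>count_space UNIV) = (\<Sum>k\<le>n. w (k, n-k))" .
  qed
  finally show ?thesis .
qed

lemma regroup_pmf:
  fixes F :: "nat \<times> nat \<Rightarrow> ennreal"
  shows "(\<integral>\<^sup>+z. F z \<partial>measure_pmf P) = (\<integral>\<^sup>+n. (\<Sum>k\<le>n. ennreal (pmf P (k, n-k)) * F (k, n-k)) \<partial>count_space UNIV)"
  by (simp add: nn_integral_measure_pmf regroup_count[of "\<lambda>z. ennreal (pmf P z) * F z"])



lemma hockey: "(\<Sum>j\<le>n. (j + K - 1) choose j) = (n + K) choose n"
proof (induction n)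
  case 0 then show ?case by simp
next
  case (Suc n)
  have "((n + K) choose n) + ((Suc n + K - 1) choose (Suc n)) = ((Suc n + K) choose (Suc n))"
  proof (cases K)
    case 0 then show ?thesis by simp
  next
    case (Suc K')
    have "((Suc (n + K')) choose (Suc n)) = ((n + K') choose n) + ((n + K') choose (Suc n))"
      by (rule binomial_Suc_Suc)
    then show ?thesis using Suc by (simp add: add.commute add.left_commute)
  qed
  then show ?case using Suc by simp
qed

lemma hockey_flip: "(\<Sum>k\<le>n. (n - k + K - 1) choose (n - k)) = (n + K) choose n"
proof -
  have "(\<Sum>k\<le>n. (n - k + K - 1) choose (n - k)) = (\<Sum>j\<le>n. (j + K - 1) choose j)"
    by (rule sum.reindex_bij_witness[of _ "\<lambda>j. n - j" "\<lambda>k. n - k"]) auto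
  then show ?thesis using hockey by simp
qed

lemma absorb: "real ((n + K - 1) choose n) * (real n + real K) = real K * real ((n + K) choose n)"
proof (cases K)
  case 0
  then show ?thesis by (cases n) auto
next
  case (Suc K')
  have "(n + K - n) * ((n + K) choose n) = (n + K) * ((n + K - 1) choose n)"
    by (rule binomial_absorb_comp)
  then have "real ((n + K - n) * ((n + K) choose n)) = real ((n + K) * ((n + K - 1) choose n))"
    by simp
  then show ?thesis by (simp add: algebra_simps)
qed

lemma sum_g: "(\<Sum>k\<le>n. c k * g k) = (\<Sum>k\<le>n. c k) - c 0"
proof -
  have "(\<Sum>k\<le>n. c k * g k) = (\<Sum>k\<le>n. c k - (if k = 0 then c 0 else 0))"
    by (intro sum.cong) (auto simp: g_def)
  also have "\<dots> = (\<Sum>k\<le>n. c k) - c 0"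
    by (simp add: sum_subtractf)
  finally show ?thesis .
qed

lemma conv_g:
  fixes p q :: real
  shows "(\<Sum>k\<le>n. (q^k*p) * (real ((n-k+K-1) choose (n-k)) * p^K * q^(n-k)) * g k)
       = real n / (real n + real (Suc K) - 1) * (\<Sum>k\<le>n. (q^k*p) * (real ((n-k+K-1) choose (n-k)) * p^K * q^(n-k)))"
proof -
  define c where "c = (\<lambda>k. (q^k*p) * (real ((n-k+K-1) choose (n-k)) * p^K * q^(n-k)))"
  have c: "c k = p^(Suc K) * q^n * real ((n-k+K-1) choose (n-k))" if "k \<le> n" for k
  proof -
    have "q^k * q^(n-k) = q^n" using that by (simp add: power_add[symmetric])
    then show ?thesis unfolding c_def by (simp add: algebra_simps)
  qed
  define T where "T = real ((n + K) choose n)"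
  have sumc: "(\<Sum>k\<le>n. c k) = p^(Suc K) * q^n * T"
  proof -
    have "(\<Sum>k\<le>n. c k) = (\<Sum>k\<le>n. p^(Suc K) * q^n * real ((n-k+K-1) choose (n-k)))"
      by (intro sum.cong) (auto simp: c)
    also have "\<dots> = p^(Suc K) * q^n * real (\<Sum>k\<le>n. (n-k+K-1) choose (n-k))"
      by (simp add: sum_distrib_left)
    finally show ?thesis unfolding T_def hockey_flip .
  qed
  have c0: "c 0 = p^(Suc K) * q^n * real ((n+K-1) choose n)" using c[of 0] by simp
  have key: "T - real ((n+K-1) choose n) = real n / (real n + real K) * T"
  proof (cases "n + K = 0")
    case True then show ?thesis unfolding T_def by simp
  next
    case False
    then have pos: "real n + real K > 0" by linarith
    have "real ((n + K - 1) choose n) = real K * T / (real n + real K)"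
      using absorb[of n K] pos unfolding T_def by (simp add: field_simps)
    then show ?thesis using pos by (simp add: field_simps)
  qed
  have "(\<Sum>k\<le>n. c k * g k) = p^(Suc K) * q^n * (T - real ((n+K-1) choose n))"
    unfolding sum_g[of c n] sumc c0 by (simp add: algebra_simps)
  also have "\<dots> = real n / (real n + real (Suc K) - 1) * (\<Sum>k\<le>n. c k)"
    unfolding key sumc by simp
  finally show ?thesis unfolding c_def .
qed


definition G :: "nat \<Rightarrow> nat \<Rightarrow> real" where
  "G K n = real n / (real n + real K - 1)"

lemma sum_ennreal_mult:
  assumes "\<And>k. a k \<ge> 0" "\<And>k. b k \<ge> 0"
  shows "(\<Sum>k\<in>A. ennreal (a k) * ennreal (b k)) = ennreal (\<Sum>k\<in>A. a k * b k)"
  using assms by (simp add: ennreal_mult[symmetric] sum_nonneg)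

lemma cond_g:
  assumes rho: "\<rho> > 0" and fin: "finite J" and x: "x \<in> J"
  shows "(\<integral>\<^sup>+\<eta>. ennreal (indicator S (\<Sum>y\<in>J. \<eta> y) * g (\<eta> x)) \<partial>nu \<rho>)
       = (\<integral>\<^sup>+\<eta>. ennreal (indicator S (\<Sum>y\<in>J. \<eta> y) * G (card J) (\<Sum>y\<in>J. \<eta> y)) \<partial>nu \<rho>)"
proof -
  define J' where "J' = J - {x}"
  define p where "p = 1 / (1 + \<rho>)"
  have p: "p \<in> {0<..1}" unfolding p_def using rho by auto
  have fin': "finite J'" and x': "x \<notin> J'" and JJ: "J = insert x J'" 
    using fin x unfolding J'_def by auto
  have cardJ: "card J = Suc (card J')" using fin' x' JJ by simp
  define P where "P = pair_pmf (marg \<rho>) (neg_binomial_pmf (card J') p)"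
  define H2 where "H2 = (\<lambda>k m. ennreal (indicator S (k + m) * g k))"
  define f where "f = (\<lambda>n. ennreal (indicator S n * G (card J) n))"
  have sumJ: "(\<Sum>y\<in>J. \<eta> y) = \<eta> x + (\<Sum>y\<in>J'. \<eta> y)" for \<eta> :: "int \<Rightarrow> nat"
    using fin' x' JJ by simp
  have "(\<integral>\<^sup>+\<eta>. ennreal (indicator S (\<Sum>y\<in>J. \<eta> y) * g (\<eta> x)) \<partial>nu \<rho>)
      = (\<integral>\<^sup>+\<eta>. H2 (\<eta> x) (\<Sum>y\<in>J'. \<eta> y) \<partial>nu \<rho>)"
    unfolding H2_def sumJ ..
  also have "\<dots> = (\<integral>\<^sup>+m. \<integral>\<^sup>+k. H2 k m \<partial>marg \<rho> \<partial>NB \<rho> (card J'))"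
    by (rule joint_law[OF fin' x' law_sum[OF fin']])
  also have "\<dots> = (\<integral>\<^sup>+z. H2 (fst z) (snd z) \<partial>P)"
    unfolding P_def p_def
    by (subst pair_commute_pmf) (simp add: nn_integral_pair_pmf' case_prod_unfold)
  also have "\<dots> = (\<integral>\<^sup>+n. (\<Sum>k\<le>n. ennreal (pmf P (k, n-k)) * H2 k (n-k)) \<partial>count_space UNIV)"
    using regroup_pmf[where F="\<lambda>z. H2 (fst z) (snd z)" and P=P] by simp
  also have "\<dots> = (\<integral>\<^sup>+n. (\<Sum>k\<le>n. ennreal (pmf P (k, n-k)) * f (k + (n-k))) \<partial>count_space UNIV)"
  proof (intro nn_integral_cong)
    fix n :: nat
    have pm: "pmf P (k, n-k) = ((1-p)^k*p) * (real ((n-k+card J'-1) choose (n-k)) * p^card J' * (1-p)^(n-k))" for k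
      unfolding P_def marg_def p_def[symmetric] using p by (simp add: pmf_pair pmf_neg_binomial)
    have "(\<Sum>k\<le>n. pmf P (k, n-k) * (indicator S n * g k)) = (\<Sum>k\<le>n. pmf P (k, n-k) * (indicator S n * G (card J) n))"
    proof -
      have cg: "(\<Sum>k\<le>n. pmf P (k,n-k) * g k) = G (card J) n * (\<Sum>k\<le>n. pmf P (k,n-k))"
        unfolding pm G_def cardJ by (rule conv_g)
      have "(\<Sum>k\<le>n. pmf P (k, n-k) * (indicator S n * g k)) = indicator S n * (\<Sum>k\<le>n. pmf P (k,n-k) * g k)"
        by (simp add: sum_distrib_left ac_simps)
      also have "\<dots> = indicator S n * (G (card J) n * (\<Sum>k\<le>n. pmf P (k,n-k)))" by (simp only: cg)
      also have "\<dots> = (\<Sum>k\<le>n. pmf P (k, n-k) * (indicator S n * G (card J) n))"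
        by (simp add: sum_distrib_left ac_simps)
      finally show ?thesis .
    qed
    moreover have "G (card J) n \<ge> 0" unfolding G_def cardJ by simp
    ultimately show "(\<Sum>k\<le>n. ennreal (pmf P (k, n-k)) * H2 k (n-k)) = (\<Sum>k\<le>n. ennreal (pmf P (k, n-k)) * f (k + (n-k)))"
      unfolding H2_def f_def
      by (subst (1 2) sum.cong[OF refl, where h="\<lambda>k. ennreal (pmf P (k, n-k)) * ennreal (indicator S n * _ k)"])
         (auto simp: sum_ennreal_mult g_def)
  qed
  also have "\<dots> = (\<integral>\<^sup>+z. f (fst z + snd z) \<partial>P)"
    using regroup_pmf[where F="\<lambda>z. f (fst z + snd z)" and P=P] by simp
  also have "\<dots> = (\<integral>\<^sup>+n. f n \<partial>NB \<rho> (card J))"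
    unfolding P_def cardJ p_def by (simp add: neg_binomial_pmf_Suc marg_def case_prod_unfold)
  also have "\<dots> = (\<integral>\<^sup>+\<eta>. f (\<Sum>y\<in>J. \<eta> y) \<partial>nu \<rho>)"
    by (rule law_sum[OF fin, symmetric])
  finally show ?thesis unfolding f_def .
qed



lemma binom_step: "real ((m + K) choose (Suc m)) * real (Suc m) = real K * real ((m + K) choose m)"
proof -
  have "Suc m * ((m + K) choose Suc m) = (m + K) * ((m + K - 1) choose m)"
    by (rule binomial_absorption)
  then have "real (Suc m) * real ((m + K) choose Suc m) = (real m + real K) * real ((m + K - 1) choose m)"
    by (metis of_nat_add of_nat_mult)
  with absorb[of m K] show ?thesis by (simp add: algebra_simps)
qed

lemma pmf_step:
  assumes rho: "\<rho> > 0"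
  shows "pmf (neg_binomial_pmf K (1/(1+\<rho>))) (Suc m) * real (Suc m) = real K * \<rho> * pmf (neg_binomial_pmf (Suc K) (1/(1+\<rho>))) m"
proof -
  have p: "1/(1+\<rho>) \<in> {0<..1}" using rho by auto
  have q: "1 - 1/(1+\<rho>) = \<rho>/(1+\<rho>)" using rho by (simp add: field_simps)
  have e: "Suc m + K - 1 = m + K" by simp
  show ?thesis
    unfolding pmf_neg_binomial[OF p] q e
    using binom_step[of m K] rho
    by (simp add: field_simps power_Suc)
qed

lemma nn_shift:
  fixes h :: "nat \<Rightarrow> ennreal"
  assumes "h 0 = 0"
  shows "(\<integral>\<^sup>+n. h n \<partial>count_space UNIV) = (\<integral>\<^sup>+m. h (Suc m) \<partial>count_space UNIV)"
proof -
  have "(\<integral>\<^sup>+m. h (Suc m) \<partial>count_space UNIV) = (\<integral>\<^sup>+n. h n \<partial>count_space (range Suc))"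
    by (rule nn_integral_bij_count_space) (simp add: bij_betw_def)
  also have "\<dots> = (\<integral>\<^sup>+n. h n * indicator (range Suc) n \<partial>count_space UNIV)"
    by (simp add: nn_integral_count_space_indicator)
  also have "\<dots> = (\<integral>\<^sup>+n. h n \<partial>count_space UNIV)"
    using assms by (intro nn_integral_cong) (auto simp: indicator_def, metis not0_implies_Suc rangeI)
  finally show ?thesis by simp
qed

lemma nn_step:
  assumes rho: "\<rho> > 0"
  shows "(\<integral>\<^sup>+n. ennreal (real n) * f (n - 1) \<partial>NB \<rho> K) = ennreal (real K * \<rho>) * (\<integral>\<^sup>+m. f m \<partial>NB \<rho> (Suc K))"
proof -
  let ?p = "\<lambda>K n. pmf (neg_binomial_pmf K (1/(1+\<rho>))) n"
  have "(\<integral>\<^sup>+n. ennreal (real n) * f (n - 1) \<partial>NB \<rho> K) = (\<integral>\<^sup>+n. ennreal (?p K n) * (ennreal (real n) * f (n - 1)) \<partial>count_space UNIV)"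
    by (rule nn_integral_measure_pmf)
  also have "\<dots> = (\<integral>\<^sup>+m. ennreal (?p K (Suc m)) * (ennreal (real (Suc m)) * f m) \<partial>count_space UNIV)"
    by (subst nn_shift) simp_all
  also have "\<dots> = (\<integral>\<^sup>+m. ennreal (real K * \<rho>) * (ennreal (?p (Suc K) m) * f m) \<partial>count_space UNIV)"
  proof (intro nn_integral_cong)
    fix m
    have "ennreal (?p K (Suc m)) * (ennreal (real (Suc m)) * f m) = ennreal (?p K (Suc m) * real (Suc m)) * f m"
      by (simp add: ennreal_mult mult.assoc)
    also have "\<dots> = ennreal (real K * \<rho>) * (ennreal (?p (Suc K) m) * f m)"
      unfolding pmf_step[OF rho] using rho by (simp add: ennreal_mult mult.assoc)
    finally show "ennreal (?p K (Suc m)) * (ennreal (real (Suc m)) * f m) = ennreal (real K * \<rho>) * (ennreal (?p (Suc K) m) * f m)" .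
  qed
  also have "\<dots> = ennreal (real K * \<rho>) * (\<integral>\<^sup>+m. ennreal (?p (Suc K) m) * f m \<partial>count_space UNIV)"
    by (rule nn_integral_cmult) simp
  also have "\<dots> = ennreal (real K * \<rho>) * (\<integral>\<^sup>+m. f m \<partial>NB \<rho> (Suc K))"
    by (simp add: nn_integral_measure_pmf)
  finally show ?thesis .
qed

fun ff :: "nat \<Rightarrow> nat \<Rightarrow> real" where
  "ff 0 n = 1"
| "ff (Suc j) n = real n * ff j (n - 1)"

lemma ff_nonneg: "ff j n \<ge> 0"
  by (induction j arbitrary: n) auto

lemma ff_moment:
  assumes rho: "\<rho> > 0"
  shows "(\<integral>\<^sup>+n. ennreal (ff j n) \<partial>NB \<rho> K) = ennreal ((\<Prod>i<j. real (K + i)) * \<rho> ^ j)"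
proof (induction j arbitrary: K)
  case 0
  then show ?case by (simp add: measure_pmf.emeasure_space_1)
next
  case (Suc j)
  have "(\<integral>\<^sup>+n. ennreal (ff (Suc j) n) \<partial>NB \<rho> K) = (\<integral>\<^sup>+n. ennreal (real n) * ennreal (ff j (n - 1)) \<partial>NB \<rho> K)"
    by (simp add: ennreal_mult ff_nonneg)
  also have "\<dots> = ennreal (real K * \<rho>) * (\<integral>\<^sup>+m. ennreal (ff j m) \<partial>NB \<rho> (Suc K))"
    by (rule nn_step[OF rho])
  also have "\<dots> = ennreal (real K * \<rho>) * ennreal ((\<Prod>i<j. real (Suc K + i)) * \<rho> ^ j)"
    by (simp only: Suc)
  also have "\<dots> = ennreal ((\<Prod>i<Suc j. real (K + i)) * \<rho> ^ Suc j)"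
  proof -
    have "(\<Prod>i<Suc j. real (K + i)) = real K * (\<Prod>i<j. real (Suc K + i))"
      by (subst prod.lessThan_Suc_shift) simp
    moreover have "(\<Prod>i<j. real (Suc K + i)) \<ge> 0" by (simp add: prod_nonneg)
    ultimately show ?thesis using rho
      by (simp add: ennreal_mult'[symmetric] mult.assoc mult.left_commute)
  qed
  finally show ?case .
qed

lemma ff_real: "ff j n = (\<Prod>i<j. real n - real i)"
proof (induction j arbitrary: n)
  case 0 then show ?case by simp
next
  case (Suc j)
  show ?case
  proof (cases n)
    case 0 then show ?thesis by (auto simp: prod.lessThan_Suc_shift)
  next
    case (Suc m)
    have a: "(\<Prod>i<Suc j. real (Suc m) - real i) = (real (Suc m) - real 0) * (\<Prod>i<j. real (Suc m) - real (Suc i))"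
      by (rule prod.lessThan_Suc_shift)
    have b: "(\<Prod>i<j. real (Suc m) - real (Suc i)) = (\<Prod>i<j. real m - real i)"
      by (intro prod.cong) auto
    show ?thesis using Suc.IH[of m] unfolding Suc a b by simp
  qed
qed

lemma ff_int:
  assumes rho: "\<rho> > 0"
  shows "integrable (NB \<rho> K) (ff j)" "(\<integral>n. ff j n \<partial>NB \<rho> K) = (\<Prod>i<j. real (K + i)) * \<rho> ^ j"
proof -
  have nn: "(\<Prod>i<j. real (K + i)) * \<rho> ^ j \<ge> 0" using rho by (simp add: prod_nonneg)
  show "integrable (NB \<rho> K) (ff j)"
    by (rule integrableI_nonneg) (simp_all add: ff_nonneg ff_moment[OF rho])
  have "(\<integral>n. ff j n \<partial>NB \<rho> K) = enn2real (\<integral>\<^sup>+n. ennreal (ff j n) \<partial>NB \<rho> K)"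
    by (rule integral_eq_nn_integral) (simp_all add: ff_nonneg)
  then show "(\<integral>n. ff j n \<partial>NB \<rho> K) = (\<Prod>i<j. real (K + i)) * \<rho> ^ j"
    using nn by (simp add: ff_moment[OF rho])
qed

lemma d2_expand: "(real n - a)^2 = ff 2 n + (1 - 2*a) * ff 1 n + a^2"
  by (simp add: ff_real numeral_2_eq_2 power2_eq_square algebra_simps)

lemma d4_expand: "(real n - a)^4 = ff 4 n + (6 - 4*a) * ff 3 n + (7 - 12*a + 6*a^2) * ff 2 n
    + (1 - 4*a + 6*a^2 - 4*a^3) * ff 1 n + a^4"
  by (simp add: ff_real eval_nat_numeral algebra_simps)

lemma comb:
  fixes \<rho> :: real and K :: nat
  assumes rho: "\<rho> > 0"
  defines "mu \<equiv> \<lambda>j. (\<Prod>i<j. real (K + i)) * \<rho> ^ j"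
  shows "integrable (NB \<rho> K) (\<lambda>n. c0 + c1 * ff 1 n + c2 * ff 2 n + c3 * ff 3 n + c4 * ff 4 n)"
    "(\<integral>n. c0 + c1 * ff 1 n + c2 * ff 2 n + c3 * ff 3 n + c4 * ff 4 n \<partial>NB \<rho> K) =
      c0 + c1 * mu 1 + c2 * mu 2 + c3 * mu 3 + c4 * mu 4"
proof -
  note I = ff_int[OF rho]
  have t: "integrable (NB \<rho> K) (\<lambda>n. c * ff j n)" "(\<integral>n. c * ff j n \<partial>NB \<rho> K) = c * mu j" for c j
    using I[of K j] unfolding mu_def by auto
  have i0: "integrable (NB \<rho> K) (\<lambda>n. c0)" by simp
  have i1: "integrable (NB \<rho> K) (\<lambda>n. c0 + c1 * ff 1 n)" by (rule Bochner_Integration.integrable_add[OF i0 t(1)])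
  have i2: "integrable (NB \<rho> K) (\<lambda>n. c0 + c1 * ff 1 n + c2 * ff 2 n)" by (rule Bochner_Integration.integrable_add[OF i1 t(1)])
  have i3: "integrable (NB \<rho> K) (\<lambda>n. c0 + c1 * ff 1 n + c2 * ff 2 n + c3 * ff 3 n)" by (rule Bochner_Integration.integrable_add[OF i2 t(1)])
  show "integrable (NB \<rho> K) (\<lambda>n. c0 + c1 * ff 1 n + c2 * ff 2 n + c3 * ff 3 n + c4 * ff 4 n)"
    by (rule Bochner_Integration.integrable_add[OF i3 t(1)])
  have "(\<integral>n. c0 + c1 * ff 1 n + c2 * ff 2 n + c3 * ff 3 n + c4 * ff 4 n \<partial>NB \<rho> K)
    = (\<integral>n. c0 + c1 * ff 1 n + c2 * ff 2 n + c3 * ff 3 n \<partial>NB \<rho> K) + c4 * mu 4"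
    using Bochner_Integration.integral_add[OF i3 t(1)] t(2) by simp
  also have "(\<integral>n. c0 + c1 * ff 1 n + c2 * ff 2 n + c3 * ff 3 n \<partial>NB \<rho> K)
    = (\<integral>n. c0 + c1 * ff 1 n + c2 * ff 2 n \<partial>NB \<rho> K) + c3 * mu 3"
    using Bochner_Integration.integral_add[OF i2 t(1)] t(2) by simp
  also have "(\<integral>n. c0 + c1 * ff 1 n + c2 * ff 2 n \<partial>NB \<rho> K)
    = (\<integral>n. c0 + c1 * ff 1 n \<partial>NB \<rho> K) + c2 * mu 2"
    using Bochner_Integration.integral_add[OF i1 t(1)] t(2) by simp
  also have "(\<integral>n. c0 + c1 * ff 1 n \<partial>NB \<rho> K) = (\<integral>n. c0 \<partial>NB \<rho> K) + (\<integral>n. c1 * ff 1 n \<partial>NB \<rho> K)"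
    by (rule Bochner_Integration.integral_add[OF i0 t(1)])
  also have "\<dots> = c0 + c1 * mu 1"
    by (simp only: t(2)) (simp add: measure_pmf.prob_space)
  finally show "(\<integral>n. c0 + c1 * ff 1 n + c2 * ff 2 n + c3 * ff 3 n + c4 * ff 4 n \<partial>NB \<rho> K) =
      c0 + c1 * mu 1 + c2 * mu 2 + c3 * mu 3 + c4 * mu 4" by simp
qed

lemma d2_comb: "(real n - a)^2 = a^2 + (1 - 2*a) * ff 1 n + 1 * ff 2 n + 0 * ff 3 n + 0 * ff 4 n"
  by (simp add: ff_real numeral_2_eq_2 power2_eq_square algebra_simps)

lemma d4_comb: "(real n - a)^4 = a^4 + (1 - 4*a + 6*a^2 - 4*a^3) * ff 1 n + (7 - 12*a + 6*a^2) * ff 2 n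
    + (6 - 4*a) * ff 3 n + 1 * ff 4 n"
  by (simp add: ff_real eval_nat_numeral algebra_simps)

lemma E_d2:
  assumes rho: "\<rho> > 0"
  shows "integrable (NB \<rho> K) (\<lambda>n. (real n - real K * \<rho>)^2)"
    "(\<integral>n. (real n - real K * \<rho>)^2 \<partial>NB \<rho> K) = real K * \<rho> * (1 + \<rho>)"
proof -
  let ?a = "real K * \<rho>"
  have e: "(\<lambda>n. (real n - ?a)^2) = (\<lambda>n. ?a^2 + (1 - 2*?a) * ff 1 n + 1 * ff 2 n + 0 * ff 3 n + 0 * ff 4 n)"
    by (rule ext, rule d2_comb)
  show "integrable (NB \<rho> K) (\<lambda>n. (real n - real K * \<rho>)^2)"
    unfolding e by (rule comb(1)[OF rho])
  show "(\<integral>n. (real n - real K * \<rho>)^2 \<partial>NB \<rho> K) = real K * \<rho> * (1 + \<rho>)"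
    unfolding e comb(2)[OF rho] by (simp add: eval_nat_numeral algebra_simps power2_eq_square)
qed

lemma E_d4:
  assumes rho: "\<rho> > 0"
  shows "integrable (NB \<rho> K) (\<lambda>n. (real n - real K * \<rho>)^4)"
    "(\<integral>n. (real n - real K * \<rho>)^4 \<partial>NB \<rho> K) =
       3 * (real K)^2 * \<rho>^2 * (1+\<rho>)^2 + real K * \<rho> * (1+\<rho>) * (1 + 6*\<rho> + 6*\<rho>^2)"
proof -
  let ?a = "real K * \<rho>"
  have e: "(\<lambda>n. (real n - ?a)^4) = (\<lambda>n. ?a^4 + (1 - 4*?a + 6*?a^2 - 4*?a^3) * ff 1 n + (7 - 12*?a + 6*?a^2) * ff 2 n
    + (6 - 4*?a) * ff 3 n + 1 * ff 4 n)"
    by (rule ext, rule d4_comb)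
  show "integrable (NB \<rho> K) (\<lambda>n. (real n - real K * \<rho>)^4)"
    unfolding e by (rule comb(1)[OF rho])
  show "(\<integral>n. (real n - real K * \<rho>)^4 \<partial>NB \<rho> K) =
       3 * (real K)^2 * \<rho>^2 * (1+\<rho>)^2 + real K * \<rho> * (1+\<rho>) * (1 + 6*\<rho> + 6*\<rho>^2)"
    unfolding e comb(2)[OF rho] by (simp add: eval_nat_numeral algebra_simps)
qed



definition psi :: "real \<Rightarrow> nat \<Rightarrow> nat \<Rightarrow> real" where
  "psi \<rho> K n = real K * G K n - real K * phi \<rho> - deriv phi \<rho> * (real n - real K * \<rho>)"

lemma meas_N: "(\<lambda>\<eta>. \<Sum>x\<in>J. \<eta> x) \<in> nu \<rho> \<rightarrow>\<^sub>M count_space UNIV"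
  unfolding nu_def by measurable

lemma meas_coord: "(\<lambda>\<eta>. \<eta> x) \<in> nu \<rho> \<rightarrow>\<^sub>M count_space (UNIV::nat set)"
  unfolding nu_def by measurable

lemma meas_nat_comp: "h \<in> M \<rightarrow>\<^sub>M count_space UNIV \<Longrightarrow> (\<lambda>\<omega>. F (h \<omega>)) \<in> borel_measurable M"
  by (rule measurable_compose[of h M "count_space UNIV"]) auto

lemma int_N:
  assumes rho: "\<rho> > 0" and fin: "finite J"
  shows "integrable (nu \<rho>) (\<lambda>\<eta>. real (\<Sum>x\<in>J. \<eta> x))"
proof (rule integrableI_nonneg)
  show "(\<lambda>\<eta>. real (\<Sum>x\<in>J. \<eta> x)) \<in> borel_measurable (nu \<rho>)"
    by (rule meas_nat_comp[OF meas_N])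
  have "(\<integral>\<^sup>+\<eta>. ennreal (real (\<Sum>x\<in>J. \<eta> x)) \<partial>nu \<rho>) = (\<integral>\<^sup>+n. ennreal (real n) \<partial>NB \<rho> (card J))"
    by (rule law_sum[OF fin])
  also have "\<dots> = ennreal (real (card J) * \<rho>)"
    using ff_moment[OF rho, where j=1 and K="card J"] by simp
  finally show "(\<integral>\<^sup>+\<eta>. ennreal (real (\<Sum>x\<in>J. \<eta> x)) \<partial>nu \<rho>) < \<infinity>" by simp
qed (simp add: sum_nonneg)

lemma G_bounds: "K \<ge> 1 \<Longrightarrow> 0 \<le> G K n \<and> G K n \<le> 1"
  unfolding G_def by (auto simp: divide_le_eq_1)

lemma cond_g_int:
  assumes rho: "\<rho> > 0" and fin: "finite J" and x: "x \<in> J"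
  shows "(\<integral>\<eta>. indicator S (\<Sum>y\<in>J. \<eta> y) * g (\<eta> x) \<partial>nu \<rho>)
       = (\<integral>\<eta>. indicator S (\<Sum>y\<in>J. \<eta> y) * G (card J) (\<Sum>y\<in>J. \<eta> y) \<partial>nu \<rho>)"
proof -
  have K: "card J \<ge> 1" using fin x by (metis One_nat_def Suc_leI card_gt_0_iff empty_iff)
  have "(\<integral>\<eta>. indicator S (\<Sum>y\<in>J. \<eta> y) * g (\<eta> x) \<partial>nu \<rho>)
      = enn2real (\<integral>\<^sup>+\<eta>. ennreal (indicator S (\<Sum>y\<in>J. \<eta> y) * g (\<eta> x)) \<partial>nu \<rho>)"
    by (rule integral_eq_nn_integral)
       (auto intro!: borel_measurable_times meas_nat_comp[OF meas_N] meas_nat_comp[OF meas_coord] simp: g_def)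
  also have "\<dots> = enn2real (\<integral>\<^sup>+\<eta>. ennreal (indicator S (\<Sum>y\<in>J. \<eta> y) * G (card J) (\<Sum>y\<in>J. \<eta> y)) \<partial>nu \<rho>)"
    by (simp only: cond_g[OF rho fin x])
  also have "\<dots> = (\<integral>\<eta>. indicator S (\<Sum>y\<in>J. \<eta> y) * G (card J) (\<Sum>y\<in>J. \<eta> y) \<partial>nu \<rho>)"
    by (rule integral_eq_nn_integral[symmetric])
       (auto intro!: meas_nat_comp[OF meas_N] simp: G_bounds[OF K])
  finally show ?thesis .
qed

lemma CE:
  assumes rho: "\<rho> > 0" and fin: "finite J" and ne: "J \<noteq> {}"
  shows "AE \<eta> in nu \<rho>. real_cond_exp (nu \<rho>) (MI \<rho> J) (\<lambda>\<eta>. \<Sum>x\<in>J. Vg \<rho> (\<eta> x)) \<eta>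
            = psi \<rho> (card J) (\<Sum>x\<in>J. \<eta> x)"
proof -
  interpret P: prob_space "nu \<rho>" by (rule nu_prob)
  define N where "N = (\<lambda>\<eta>::int\<Rightarrow>nat. \<Sum>x\<in>J. \<eta> x)"
  define K where "K = card J"
  define c where "c = deriv phi \<rho>"
  have K1: "K \<ge> 1" unfolding K_def using fin ne by (simp add: Suc_leI card_gt_0_iff)
  have Nm: "N \<in> nu \<rho> \<rightarrow>\<^sub>M count_space UNIV" unfolding N_def by (rule meas_N)
  have NR: "(\<lambda>\<eta>. F (N \<eta>)) \<in> borel_measurable (nu \<rho>)" for F :: "nat \<Rightarrow> real"
    by (rule meas_nat_comp[OF Nm])
  have CR: "(\<lambda>\<eta>. F (\<eta> x)) \<in> borel_measurable (nu \<rho>)" for F :: "nat \<Rightarrow> real" and x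
    by (rule meas_nat_comp[OF meas_coord])
  have setsMI: "sets (MI \<rho> J) = {N -` A \<inter> space (nu \<rho>) | A. A \<in> sets (count_space UNIV)}"
    unfolding MI_def N_def[symmetric] by (rule sets_vimage_algebra2) simp
  have spaceMI: "space (MI \<rho> J) = space (nu \<rho>)" by (simp add: MI_def)
  have sub: "subalgebra (nu \<rho>) (MI \<rho> J)"
    unfolding subalgebra_def using measurable_sets[OF Nm]
    by (auto simp: setsMI spaceMI)
  have "finite_measure (restr_to_subalg (nu \<rho>) (MI \<rho> J))"
    by (rule finite_measure_restr_to_subalg[OF sub]) (rule P.finite_measure_axioms)
  then interpret F: finite_measure "restr_to_subalg (nu \<rho>) (MI \<rho> J)" .
  have sfs: "sigma_finite_subalgebra (nu \<rho>) (MI \<rho> J)"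
    unfolding sigma_finite_subalgebra_def using sub F.sigma_finite_measure_axioms by auto
  interpret S: sigma_finite_subalgebra "nu \<rho>" "MI \<rho> J" by (rule sfs)
  have intN: "integrable (nu \<rho>) (\<lambda>\<eta>. real (N \<eta>))" unfolding N_def by (rule int_N[OF rho fin])
  define L where "L = (\<lambda>\<eta>. real K * phi \<rho> + c * (real (N \<eta>) - real K * \<rho>))"
  have intL: "integrable (nu \<rho>) L" unfolding L_def using intN by auto
  have Lm: "L \<in> borel_measurable (nu \<rho>)" unfolding L_def using NR[of real] by measurable
  have intg: "integrable (nu \<rho>) (\<lambda>\<eta>. F (N \<eta>) * g (\<eta> x))" if "\<And>n. \<bar>F n\<bar> \<le> 1" for F x
    by (rule P.integrable_const_bound[where B=1])
       (auto intro!: borel_measurable_times NR CR simp: g_def abs_mult that)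
  have intG: "integrable (nu \<rho>) (\<lambda>\<eta>. F (N \<eta>) * G K (N \<eta>))" if "\<And>n. \<bar>F n\<bar> \<le> 1" for F
  proof -
    have b: "\<bar>F n\<bar> * G K n \<le> 1" for n
      using that[of n] G_bounds[OF K1, of n] by (intro mult_le_one) auto
    show ?thesis
      by (rule P.integrable_const_bound[where B=1])
         (auto intro!: borel_measurable_times NR simp: abs_mult G_bounds[OF K1] b)
  qed
  have fdec: "(\<Sum>x\<in>J. Vg \<rho> (\<eta> x)) = (\<Sum>x\<in>J. 1 * g (\<eta> x)) - L \<eta>" for \<eta>
    unfolding L_def N_def K_def c_def Vg_def
    by (simp add: sum.distrib sum_subtractf sum_distrib_left of_nat_sum algebra_simps)
  have pdec: "psi \<rho> K (N \<eta>) = real K * (1 * G K (N \<eta>)) - L \<eta>" for \<eta>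
    unfolding L_def psi_def c_def by (simp add: algebra_simps)
  have Neq: "(\<Sum>x\<in>J. \<eta> x) = N \<eta>" for \<eta> unfolding N_def ..
  show ?thesis
    unfolding Neq K_def[symmetric]
  proof (rule S.real_cond_exp_charact)
    show "integrable (nu \<rho>) (\<lambda>\<eta>. \<Sum>x\<in>J. Vg \<rho> (\<eta> x))"
      unfolding fdec using intg[of "\<lambda>_. 1"] intL by auto
    show "integrable (nu \<rho>) (\<lambda>\<eta>. psi \<rho> K (N \<eta>))"
      unfolding pdec using intG[of "\<lambda>_. 1"] intL by auto
    show "(\<lambda>\<eta>. psi \<rho> K (N \<eta>)) \<in> borel_measurable (MI \<rho> J)"
      unfolding MI_def N_def[symmetric]
      by (rule meas_nat_comp, rule measurable_vimage_algebra1) simp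
  next
    fix A assume "A \<in> sets (MI \<rho> J)"
    then obtain S where A: "A = N -` S \<inter> space (nu \<rho>)" by (auto simp: setsMI)
    have ind: "indicator A \<eta> = indicator S (N \<eta>)" if "\<eta> \<in> space (nu \<rho>)" for \<eta> :: "int \<Rightarrow> nat"
      using that unfolding A by (simp add: indicator_def)
    have intLS: "integrable (nu \<rho>) (\<lambda>\<eta>. indicator S (N \<eta>) * L \<eta>)"
    proof -
      have "integrable (nu \<rho>) (\<lambda>\<eta>. L \<eta> * indicator A \<eta>)"
        by (rule integrable_real_mult_indicator) (use A Nm intL in auto)
      then show ?thesis
        by (rule Bochner_Integration.integrable_cong[THEN iffD1, rotated -1]) (auto simp: ind)
    qed
    have "(\<integral>\<eta>\<in>A. (\<Sum>x\<in>J. Vg \<rho> (\<eta> x)) \<partial>nu \<rho>)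
        = (\<integral>\<eta>. (\<Sum>x\<in>J. indicator S (N \<eta>) * g (\<eta> x)) - indicator S (N \<eta>) * L \<eta> \<partial>nu \<rho>)"
      unfolding set_lebesgue_integral_def
      by (intro Bochner_Integration.integral_cong) (auto simp: ind fdec sum_distrib_left algebra_simps)
    also have "\<dots> = (\<Sum>x\<in>J. (\<integral>\<eta>. indicator S (N \<eta>) * g (\<eta> x) \<partial>nu \<rho>)) - (\<integral>\<eta>. indicator S (N \<eta>) * L \<eta> \<partial>nu \<rho>)"
      using intg[of "indicator S"] intLS
      by (subst Bochner_Integration.integral_diff) (auto simp: integral_sum)
    also have "\<dots> = (\<Sum>x\<in>J. (\<integral>\<eta>. indicator S (N \<eta>) * G K (N \<eta>) \<partial>nu \<rho>)) - (\<integral>\<eta>. indicator S (N \<eta>) * L \<eta> \<partial>nu \<rho>)"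
      unfolding N_def K_def using cond_g_int[OF rho fin] by simp
    also have "\<dots> = (\<integral>\<eta>. real K * (indicator S (N \<eta>) * G K (N \<eta>)) - indicator S (N \<eta>) * L \<eta> \<partial>nu \<rho>)"
      using intG[of "indicator S"] intLS
      by (subst Bochner_Integration.integral_diff) (auto simp: K_def)
    also have "\<dots> = (\<integral>\<eta>\<in>A. psi \<rho> K (N \<eta>) \<partial>nu \<rho>)"
      unfolding set_lebesgue_integral_def
      by (intro Bochner_Integration.integral_cong) (auto simp: ind pdec algebra_simps)
    finally show "(\<integral>\<eta>\<in>A. (\<Sum>x\<in>J. Vg \<rho> (\<eta> x)) \<partial>nu \<rho>) = (\<integral>\<eta>\<in>A. psi \<rho> K (N \<eta>) \<partial>nu \<rho>)" .
  qed
qed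



lemma deriv_phi: assumes "\<rho> > 0" shows "deriv phi \<rho> = 1/(1+\<rho>)^2"
proof -
  have "(phi has_real_derivative 1/(1+\<rho>)^2) (at \<rho>)"
    unfolding phi_def[abs_def] using assms
    by (auto intro!: derivative_eq_intros simp: field_simps power2_eq_square)
  then show ?thesis by (rule DERIV_imp_deriv)
qed

lemma sq3: "(x + y + z)^2 \<le> 3 * (x^2 + y^2 + z^2)" for x y z :: real
proof -
  have "0 \<le> (x - y)^2 + (y - z)^2 + (x - z)^2" by simp
  then show ?thesis by (simp add: power2_eq_square algebra_simps)
qed

lemma psi_bound:
  fixes \<rho> :: real and K n :: nat
  assumes rho: "\<rho> > 0" and K1: "K \<ge> 1"
  defines "d \<equiv> real n - real K * \<rho>" and "\<kappa> \<equiv> 12 / (1+\<rho>)^4"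
  shows "(psi \<rho> K n)^2 \<le> 8 + \<kappa> * \<rho>^2 * (1+\<rho>)^2 + (2 + \<kappa>) / (real K)^2 * d^2 + \<kappa> / (real K)^2 * d^4"
proof -
  have dp: "deriv phi \<rho> = 1/(1+\<rho>)^2" by (rule deriv_phi[OF rho])
  have kpos: "\<kappa> > 0" unfolding \<kappa>_def using rho by simp
  have rest_nonneg: "0 \<le> \<kappa> * \<rho>^2 * (1+\<rho>)^2 + \<kappa> / (real K)^2 * d^4"
    using kpos by (intro add_nonneg_nonneg mult_nonneg_nonneg) auto
  show ?thesis
  proof (cases "K = 1")
    case True
    have G01: "0 \<le> G 1 n" "G 1 n \<le> 1" using G_bounds[of 1 n] by auto
    have ph: "0 \<le> phi \<rho>" "phi \<rho> \<le> 1" unfolding phi_def using rho by auto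
    have c01: "0 \<le> deriv phi \<rho>" "deriv phi \<rho> \<le> 1" unfolding dp using rho
      by (auto simp: power_le_one_iff divide_le_eq_1)
    have "\<bar>psi \<rho> K n\<bar> \<le> 1 + \<bar>d\<bar>"
    proof -
      have "psi \<rho> K n = (G 1 n - phi \<rho>) - deriv phi \<rho> * d" unfolding psi_def d_def True by simp
      moreover have "\<bar>G 1 n - phi \<rho>\<bar> \<le> 1" using G01 ph by linarith
      moreover have "\<bar>deriv phi \<rho> * d\<bar> \<le> \<bar>d\<bar>" using c01 by (simp add: abs_mult mult_left_le_one_le)
      ultimately show ?thesis by linarith
    qed
    then have "(psi \<rho> K n)^2 \<le> (1 + \<bar>d\<bar>)^2"
      by (metis abs_ge_zero power2_abs power_mono)
    also have "\<dots> \<le> 2 + 2 * d^2"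
    proof -
      have "0 \<le> (1 - \<bar>d\<bar>)^2" by simp
      then show ?thesis by (simp add: power2_eq_square algebra_simps)
    qed
    also have "\<dots> \<le> 8 + (2 + \<kappa>) / (real K)^2 * d^2"
      using True kpos by (simp add: algebra_simps)
    finally show ?thesis using rest_nonneg by linarith
  next
    case False
    then have K2: "K \<ge> 2" using K1 by linarith
    define s where "s = real n + real K - 1"
    have s: "s \<ge> real K / 2" "s > 0" unfolding s_def using K2 by auto
    define T where "T = real K * \<rho> * (1+\<rho>) - d^2 + d"
    have eq1: "psi \<rho> K n * ((1+\<rho>)^2 * s) = real K * real n * (1+\<rho>)^2 - real K * \<rho> * (1+\<rho>) * s - (real n - real K*\<rho>) * s"
    proof -
      have r1: "1 + \<rho> \<noteq> 0" using rho by simp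
      have s0: "s \<noteq> 0" using s(2) by simp
      have "real n / s * ((1+\<rho>)^2 * s) = real n * (1+\<rho>)^2" using s0 by simp
      moreover have "\<rho> / (1+\<rho>) * ((1+\<rho>)^2 * s) = \<rho> * (1+\<rho>) * s" using r1 by (simp add: power2_eq_square)
      moreover have "1 / (1+\<rho>)^2 * ((1+\<rho>)^2 * s) = s" using r1 by simp
      moreover have "psi \<rho> K n * ((1+\<rho>)^2 * s) = real K * (real n / s * ((1+\<rho>)^2 * s))
          - real K * (\<rho> / (1+\<rho>) * ((1+\<rho>)^2 * s)) - (real n - real K*\<rho>) * (1 / (1+\<rho>)^2 * ((1+\<rho>)^2 * s))"
      proof -
        have gen: "(k*a - k*b - c*dd)*w = k*(a*w) - k*(b*w) - dd*(c*w)" for k a b c dd w :: real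
          by (simp add: algebra_simps)
        show ?thesis unfolding psi_def G_def dp phi_def s_def[symmetric] by (rule gen)
      qed
      ultimately show ?thesis by (simp add: mult.assoc)
    qed
    have eq2: "real K * real n * (1+\<rho>)^2 - real K * \<rho> * (1+\<rho>) * s - (real n - real K*\<rho>) * s = T"
      unfolding T_def d_def s_def by (simp add: power2_eq_square algebra_simps)
    have eq: "psi \<rho> K n * ((1+\<rho>)^2 * s) = T" using eq1 eq2 by simp
    define X where "X = (real K)^2 * \<rho>^2 * (1+\<rho>)^2 + d^4 + d^2"
    have T2: "T^2 \<le> 3 * X"
    proof -
      have a: "T = real K * \<rho> * (1+\<rho>) + -(d^2) + d" unfolding T_def by simp
      have b: "(-(d^2))^2 = d^4" by (simp add: power2_eq_square power4_eq_xxxx)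
      have c: "(real K * \<rho> * (1+\<rho>))^2 = (real K)^2 * \<rho>^2 * (1+\<rho>)^2" by (simp add: power_mult_distrib)
      show ?thesis using sq3[of "real K * \<rho> * (1+\<rho>)" "-(d^2)" d] unfolding a X_def b c by simp
    qed
    define W0 where "W0 = ((1+\<rho>)^2 * (real K / 2))^2"
    have W0: "W0 > 0" unfolding W0_def using rho K2 by simp
    have W: "W0 \<le> ((1+\<rho>)^2 * s)^2"
      unfolding W0_def using s rho by (intro power_mono mult_left_mono) auto
    have "(psi \<rho> K n)^2 * W0 \<le> (psi \<rho> K n)^2 * ((1+\<rho>)^2 * s)^2"
      using W by (intro mult_left_mono) auto
    also have "\<dots> = T^2" using eq by (metis power_mult_distrib)
    also have "\<dots> \<le> 3 * X" by (rule T2)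
    finally have "(psi \<rho> K n)^2 \<le> 3 * X / W0" using W0 by (simp add: pos_le_divide_eq)
    also have "3 * X / W0 = \<kappa> * \<rho>^2 * (1+\<rho>)^2 + \<kappa> / (real K)^2 * d^2 + \<kappa> / (real K)^2 * d^4"
    proof -
      have K0: "real K \<noteq> 0" using K2 by simp
      have r0: "(1+\<rho>) \<noteq> 0" using rho by simp
      have w: "W0 = (1+\<rho>)^4 * (real K)^2 / 4" unfolding W0_def
        by (simp add: power_mult_distrib power2_eq_square power4_eq_xxxx)
      have "3 * X / W0 = \<kappa> * (X / (real K)^2)"
        unfolding w \<kappa>_def using K0 r0 by (simp add: field_simps)
      also have "X / (real K)^2 = \<rho>^2 * (1+\<rho>)^2 + d^4 / (real K)^2 + d^2 / (real K)^2"
        unfolding X_def using K0 by (simp add: add_divide_distrib)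
      finally show ?thesis by (simp add: algebra_simps)
    qed
    also have "\<dots> \<le> 8 + \<kappa> * \<rho>^2 * (1+\<rho>)^2 + (2 + \<kappa>) / (real K)^2 * d^2 + \<kappa> / (real K)^2 * d^4"
    proof -
      have "\<kappa> / (real K)^2 * d^2 \<le> (2 + \<kappa>) / (real K)^2 * d^2"
        using kpos by (intro mult_right_mono divide_right_mono) auto
      then show ?thesis by linarith
    qed
    finally show ?thesis .
  qed
qed



definition Cst :: "real \<Rightarrow> real" where
  "Cst \<rho> = 8 + 12 / (1+\<rho>)^4 * \<rho>^2 * (1+\<rho>)^2 + (2 + 12 / (1+\<rho>)^4) * (\<rho> * (1+\<rho>))
     + 12 / (1+\<rho>)^4 * (3 * \<rho>^2 * (1+\<rho>)^2) + 12 / (1+\<rho>)^4 * (\<rho> * (1+\<rho>) * (1 + 6*\<rho> + 6*\<rho>^2))"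

lemma final_bound:
  assumes rho: "\<rho> > 0" and K1: "K \<ge> 1"
  shows "(\<integral>\<^sup>+n. ennreal ((psi \<rho> K n)^2) \<partial>NB \<rho> K) \<le> ennreal (Cst \<rho>)"
proof -
  define \<kappa> where "\<kappa> = 12 / (1+\<rho>)^4"
  define \<alpha> where "\<alpha> = 8 + \<kappa> * \<rho>^2 * (1+\<rho>)^2"
  define \<beta> where "\<beta> = (2 + \<kappa>) / (real K)^2"
  define \<gamma> where "\<gamma> = \<kappa> / (real K)^2"
  define B where "B = (\<lambda>n::nat. \<alpha> + \<beta> * (real n - real K * \<rho>)^2 + \<gamma> * (real n - real K * \<rho>)^4)"
  have kpos: "\<kappa> > 0" unfolding \<kappa>_def using rho by simp
  have Bnn: "B n \<ge> 0" for n
    unfolding B_def \<alpha>_def \<beta>_def \<gamma>_def using kpos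
    by (intro add_nonneg_nonneg mult_nonneg_nonneg) (auto simp: zero_le_even_power)
  note I2 = E_d2[OF rho, of K] and I4 = E_d4[OF rho, of K]
  have i1: "integrable (NB \<rho> K) (\<lambda>n. \<beta> * (real n - real K * \<rho>)^2)" using I2(1) by simp
  have i2: "integrable (NB \<rho> K) (\<lambda>n. \<gamma> * (real n - real K * \<rho>)^4)" using I4(1) by simp
  have i0: "integrable (NB \<rho> K) (\<lambda>n. \<alpha> + \<beta> * (real n - real K * \<rho>)^2)"
    using i1 by simp
  have intB: "integrable (NB \<rho> K) B" unfolding B_def
    by (rule Bochner_Integration.integrable_add[OF i0 i2])
  have intBv: "(\<integral>n. B n \<partial>NB \<rho> K) = \<alpha> + \<beta> * (real K * \<rho> * (1 + \<rho>))
      + \<gamma> * (3 * (real K)^2 * \<rho>^2 * (1+\<rho>)^2 + real K * \<rho> * (1+\<rho>) * (1 + 6*\<rho> + 6*\<rho>^2))"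
    unfolding B_def
    using Bochner_Integration.integral_add[OF i0 i2] Bochner_Integration.integral_add[OF _ i1, of "\<lambda>_. \<alpha>"] I2(2) I4(2)
    by (simp add: measure_pmf.prob_space)
  have iK: "1 / real K \<le> 1" "1 / real K > 0" using K1 by auto
  have K0: "real K \<noteq> 0" using K1 by simp
  have e1: "\<beta> * (real K * \<rho> * (1 + \<rho>)) = (2 + \<kappa>) * (\<rho> * (1+\<rho>)) * (1 / real K)"
    unfolding \<beta>_def using K0 by (simp add: field_simps power2_eq_square)
  have e2: "\<gamma> * (3 * (real K)^2 * \<rho>^2 * (1+\<rho>)^2 + real K * \<rho> * (1+\<rho>) * (1 + 6*\<rho> + 6*\<rho>^2))
       = \<kappa> * (3 * \<rho>^2 * (1+\<rho>)^2) + \<kappa> * (\<rho> * (1+\<rho>) * (1 + 6*\<rho> + 6*\<rho>^2)) * (1 / real K)"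
    unfolding \<gamma>_def using K0 by (simp add: field_simps power2_eq_square)
  have le1: "(2 + \<kappa>) * (\<rho> * (1+\<rho>)) * (1 / real K) \<le> (2 + \<kappa>) * (\<rho> * (1+\<rho>))"
    using iK kpos rho by (intro mult_left_le) auto
  have le2: "\<kappa> * (\<rho> * (1+\<rho>) * (1 + 6*\<rho> + 6*\<rho>^2)) * (1 / real K) \<le> \<kappa> * (\<rho> * (1+\<rho>) * (1 + 6*\<rho> + 6*\<rho>^2))"
    using iK kpos rho by (intro mult_left_le) auto
  have intle: "(\<integral>n. B n \<partial>NB \<rho> K) \<le> Cst \<rho>"
    unfolding intBv e1 e2 Cst_def \<alpha>_def \<kappa>_def[symmetric] using le1 le2 by linarith
  have "(\<integral>\<^sup>+n. ennreal ((psi \<rho> K n)^2) \<partial>NB \<rho> K) \<le> (\<integral>\<^sup>+n. ennreal (B n) \<partial>NB \<rho> K)"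
  proof (intro nn_integral_mono ennreal_leI)
    fix n
    show "(psi \<rho> K n)^2 \<le> B n"
      unfolding B_def \<alpha>_def \<beta>_def \<gamma>_def \<kappa>_def by (rule psi_bound[OF rho K1])
  qed
  also have "\<dots> = ennreal (\<integral>n. B n \<partial>NB \<rho> K)"
    by (rule nn_integral_eq_integral[OF intB]) (simp add: Bnn)
  also have "\<dots> \<le> ennreal (Cst \<rho>)" by (rule ennreal_leI[OF intle])
  finally show ?thesis .
qed

theorem mainTheorem12:
  fixes \<rho> :: real
  assumes "\<rho> > 0"
  shows "\<exists>C::real. \<forall>K::nat. \<forall>a::int. K \<ge> 1 \<longrightarrow>
    (\<integral>\<^sup>+ \<eta>. ennreal ((real_cond_exp (nu \<rho>) (MI \<rho> {a..a + int K - 1})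
        (\<lambda>\<eta>. \<Sum>x\<in>{a..a + int K - 1}. Vg \<rho> (\<eta> x)) \<eta>)\<^sup>2) \<partial>nu \<rho>) \<le> ennreal C"
proof (intro exI allI impI)
  fix K :: nat and a :: int
  assume K1: "K \<ge> 1"
  define J where "J = {a..a + int K - 1}"
  have fin: "finite J" unfolding J_def by simp
  have cardJ: "card J = K" unfolding J_def by simp
  have ne: "J \<noteq> {}" using cardJ K1 by auto
  have "(\<integral>\<^sup>+ \<eta>. ennreal ((real_cond_exp (nu \<rho>) (MI \<rho> J) (\<lambda>\<eta>. \<Sum>x\<in>J. Vg \<rho> (\<eta> x)) \<eta>)\<^sup>2) \<partial>nu \<rho>)
      = (\<integral>\<^sup>+ \<eta>. ennreal ((psi \<rho> K (\<Sum>x\<in>J. \<eta> x))\<^sup>2) \<partial>nu \<rho>)"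
    using CE[OF assms fin ne] unfolding cardJ by (intro nn_integral_cong_AE) auto
  also have "\<dots> = (\<integral>\<^sup>+n. ennreal ((psi \<rho> K n)^2) \<partial>NB \<rho> K)"
    using law_sum[OF fin, where H="\<lambda>n. ennreal ((psi \<rho> K n)^2)" and \<rho>=\<rho>] unfolding cardJ .
  also have "\<dots> \<le> ennreal (Cst \<rho>)" by (rule final_bound[OF assms K1])
  finally show "(\<integral>\<^sup>+ \<eta>. ennreal ((real_cond_exp (nu \<rho>) (MI \<rho> {a..a + int K - 1})
        (\<lambda>\<eta>. \<Sum>x\<in>{a..a + int K - 1}. Vg \<rho> (\<eta> x)) \<eta>)\<^sup>2) \<partial>nu \<rho>) \<le> ennreal (Cst \<rho>)"
    unfolding J_def .
qed


end
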